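(* Let $X=\sum_{p,q\ge0}x_{p,q}a^pb^q\in\tilde{\mathcal{A}}_{conv.}$ with $x_{0,0}=1$. Then $X$ is invertible in the algebra $\tilde{\mathcal{A}}_{conv.}$.
   Context: Let $\mathcal{A}_0$ be the $\mathbb{C}$-algebra of polynomials in $a,b$ subject to $ab-ba=b^2$, and $\widehat{\mathcal{A}}$ its completion for the $(a,b)$-adic topology, i.e. the algebra of formal power series $\sum_{p,q\ge0}\gamma_{p,q}a^pb^q$ with product extending that of $\mathcal{A}_0$. $\tilde{\mathcal{A}}_{conv.}\subset\widehat{\mathcal{A}}$ is the subalgebra of those series for which there exist $R>1$, $C_R>0$ with $|\gamma_{p,q}|\le C_RR^{p+q}q!$ for all $p,q\in\mathbb{N}$. *)

theory Defs
  imports Complex_Main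
begin

text \<open>Elements of the completed algebra are coefficient families
  X p q = coefficient of a^p b^q (normally ordered monomials).\<close>

type_synonym ser = "nat \<Rightarrow> nat \<Rightarrow> complex"

text \<open>nf q r k l = coefficient of a^k b^l in the normal form of b^q a^r,
  computed from the relation  b^l a = a b^l - l b^(l+1)  (consequence of ab - ba = b^2).\<close>
fun nf :: "nat \<Rightarrow> nat \<Rightarrow> nat \<Rightarrow> nat \<Rightarrow> complex" where
  "nf q 0 k l = (if k = 0 \<and> l = q then 1 else 0)"
| "nf q (Suc r) k l =
     (if k \<ge> 1 then nf q r (k - 1) l else 0)
     - (if l \<ge> 1 then of_nat (l - 1) * nf q r k (l - 1) else 0)"

text \<open>Product: (a^p b^q)(a^r b^s) = a^p (b^q a^r) b^s; since the relation is homogeneous,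
  only finitely many terms contribute to each coefficient.\<close>
definition amult :: "ser \<Rightarrow> ser \<Rightarrow> ser" where
  "amult X Y i j =
     (\<Sum>p\<le>i. \<Sum>s\<le>j. \<Sum>q\<le>i+j. \<Sum>r\<le>i+j. X p q * Y r s * nf q r (i - p) (j - s))"

definition aone :: ser where
  "aone p q = (if p = 0 \<and> q = 0 then 1 else 0)"

definition conv_ser :: "ser \<Rightarrow> bool" where
  "conv_ser X \<longleftrightarrow> (\<exists>R C. R > 1 \<and> C > 0 \<and>
      (\<forall>p q. norm (X p q) \<le> C * R ^ (p + q) * fact q))"

end

theory Submission
  imports Defs
begin


lemma nf_closed:
  "nf q r k l = (if k + l = q + r \<and> k \<le> r
      then (-1)^(r-k) * of_nat ((r choose k) * pochhammer q (r-k)) else 0)"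
proof (induction r arbitrary: k l)
  case 0
  then show ?case by auto
next
  case (Suc r)
  have e: "nf q (Suc r) k l =
     (if k \<ge> 1 then nf q r (k - 1) l else 0)
     - (if l \<ge> 1 then of_nat (l - 1) * nf q r k (l - 1) else 0)" by simp
  show ?case
  proof (cases "k + l = q + Suc r \<and> k \<le> Suc r")
    case False
    then show ?thesis unfolding e Suc by auto
  next
    case True
    show ?thesis
    proof (cases k)
      case 0
      with True have l: "l = Suc (q + r)" by simp
      show ?thesis unfolding e Suc using 0 l
        by (simp add: pochhammer_Suc algebra_simps)
    next
      case (Suc k')
      show ?thesis
      proof (cases "k' = r")
        case True
        with \<open>k = Suc k'\<close> \<open>k + l = q + Suc r \<and> k \<le> Suc r\<close> have "l = q" by simp
        then show ?thesis unfolding e Suc.IH using \<open>k = Suc k'\<close> True by simp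
      next
        case False
        with \<open>k = Suc k'\<close> \<open>k + l = q + Suc r \<and> k \<le> Suc r\<close> have kr: "k' < r" and l: "l - 1 = q + r - Suc k'" "l \<ge> 1"
          by auto
        obtain m where m: "r - k' = Suc m" using kr by (metis Suc_diff_Suc)
        have m2: "r - Suc k' = m" using m by simp
        have rr: "r = Suc (k' + m)" using m kr by simp
        have ch: "Suc r choose Suc k' = (r choose k') + (r choose Suc k')" by simp
        have lq: "q + r - Suc k' = q + m" using m by simp
        show ?thesis unfolding e Suc.IH using \<open>k = Suc k'\<close> kr l m m2 rr \<open>k + l = q + Suc r \<and> k \<le> Suc r\<close>
          apply (simp add: lq ch pochhammer_Suc algebra_simps)
          done
      qed
    qed
  qed
qed


lemma nf_zero: "\<not> (k + l = q + r \<and> k \<le> r) \<Longrightarrow> nf q r k l = 0"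
  by (auto simp: nf_closed)

lemma nf_N:
  assumes "r \<le> K"
  shows "(\<Sum>k\<le>K. nf q r k (q+r-k) * pochhammer (z + of_nat (q+r-k)) k) = pochhammer z r"
  using assms
proof (induction r arbitrary: z K)
  case 0
  have "(\<Sum>k\<le>K. nf q 0 k (q+0-k) * pochhammer (z + of_nat (q+0-k)) k)
        = (\<Sum>k\<le>K. if k = 0 then 1 else 0)"
    by (rule sum.cong) (auto simp: nf_closed)
  then show ?case by simp
next
  case (Suc r)
  then obtain K' where K: "K = Suc K'" and rK: "r \<le> K'" by (cases K) auto
  define T1 where "T1 k = (if k \<ge> 1 then nf q r (k - 1) (q + Suc r - k) else 0) * pochhammer (z + of_nat (q + Suc r - k)) k" for k
  define T2 where "T2 k = (if q + Suc r - k \<ge> 1 then of_nat (q + Suc r - k - 1) * nf q r k (q + Suc r - k - 1) else 0) * pochhammer (z + of_nat (q + Suc r - k)) k" for k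
  have "(\<Sum>k\<le>K. nf q (Suc r) k (q + Suc r - k) * pochhammer (z + of_nat (q + Suc r - k)) k)
      = (\<Sum>k\<le>K. T1 k - T2 k)"
    by (rule sum.cong) (simp_all add: T1_def T2_def algebra_simps)
  also have "\<dots> = (\<Sum>k\<le>K. T1 k) - (\<Sum>k\<le>K. T2 k)" by (simp add: sum_subtractf)
  also have "(\<Sum>k\<le>K. T1 k) = (\<Sum>k\<le>K'. nf q r k (q+r-k) * pochhammer (z + of_nat (q+r-k)) (Suc k))"
    unfolding K sum.atMost_Suc_shift by (simp add: T1_def)
  also have "(\<Sum>k\<le>K. T2 k) = (\<Sum>k\<le>K'. nf q r k (q+r-k) * (of_nat (q+r-k) * pochhammer (z + of_nat (q + Suc r - k)) k))"
  proof -
    have "T2 (Suc K') = 0" using rK by (simp add: T2_def nf_zero)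
    moreover have "T2 k = nf q r k (q+r-k) * (of_nat (q+r-k) * pochhammer (z + of_nat (q + Suc r - k)) k)" for k
      by (cases "k \<le> r") (auto simp: T2_def nf_zero Suc_diff_le)
    ultimately show ?thesis unfolding K by simp
  qed
  also have "(\<Sum>k\<le>K'. nf q r k (q+r-k) * pochhammer (z + of_nat (q+r-k)) (Suc k))
     - (\<Sum>k\<le>K'. nf q r k (q+r-k) * (of_nat (q+r-k) * pochhammer (z + of_nat (q + Suc r - k)) k))
     = (\<Sum>k\<le>K'. z * (nf q r k (q+r-k) * pochhammer ((z + 1) + of_nat (q+r-k)) k))"
    unfolding sum_subtractf[symmetric]
  proof (rule sum.cong)
    fix k assume "k \<in> {..K'}"
    show "nf q r k (q+r-k) * pochhammer (z + of_nat (q+r-k)) (Suc k)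
       - nf q r k (q+r-k) * (of_nat (q+r-k) * pochhammer (z + of_nat (q + Suc r - k)) k)
       = z * (nf q r k (q+r-k) * pochhammer ((z + 1) + of_nat (q+r-k)) k)"
    proof (cases "k \<le> r")
      case True
      then have "q + Suc r - k = Suc (q + r - k)" by simp
      then show ?thesis by (simp add: pochhammer_rec algebra_simps)
    next
      case False
      then show ?thesis by (simp add: nf_zero)
    qed
  qed simp
  also have "\<dots> = z * pochhammer (z + 1) r"
    using Suc.IH[OF rK, of "z+1"] by (simp only: sum_distrib_left[symmetric])
  finally show ?case by (simp add: pochhammer_rec)
qed


lemma key_sum:
  "(\<Sum>i\<le>d. if p \<le> i \<and> s \<le> d - i then nf q r (i-p) (d-i-s) * pochhammer (z + of_nat (d-i)) i else 0)
   = (if p+q+r+s = d then pochhammer (z + of_nat s) r * pochhammer (z + of_nat (s+q+r)) p else 0)"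
proof (cases "p+q+r+s = d")
  case False
  have "(if p \<le> i \<and> s \<le> d - i then nf q r (i-p) (d-i-s) * pochhammer (z + of_nat (d-i)) i else 0) = 0" if "i \<le> d" for i
  proof -
    have "p \<le> i \<and> s \<le> d - i \<Longrightarrow> \<not> ((i-p) + (d-i-s) = q + r \<and> i - p \<le> r)" using False that by linarith
    then show ?thesis using nf_zero[of "i-p" "d-i-s" q r] by auto
  qed
  then show ?thesis using False by simp
next
  case True
  define g where "g i = (if p \<le> i \<and> s \<le> d - i then nf q r (i-p) (d-i-s) * pochhammer (z + of_nat (d-i)) i else 0)" for i
  have "(\<Sum>i\<le>d. g i) = (\<Sum>i\<in>{p..p+(q+r)}. g i)"
    by (rule sum.mono_neutral_right) (use True in \<open>auto simp: g_def\<close>)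
  also have "\<dots> = (\<Sum>k\<in>{0..q+r}. g (k + p))"
    using sum.shift_bounds_cl_nat_ivl[of g 0 p "q+r"] by (simp add: add.commute)
  also have "\<dots> = (\<Sum>k\<le>q+r. nf q r k (q+r-k) * pochhammer ((z + of_nat s) + of_nat (q+r-k)) k)
                   * pochhammer (z + of_nat (s+q+r)) p"
    unfolding atLeast0AtMost sum_distrib_right
  proof (rule sum.cong)
    fix k assume "k \<in> {..q+r}"
    then have k: "k \<le> q + r" by simp
    have a: "d - (k+p) - s = q + r - k" "d - (k + p) = s + (q + r - k)" using True k by auto
    have b: "z + of_nat (s + (q + r - k)) + of_nat k = z + of_nat (s+q+r)" using k
      by (simp add: of_nat_diff)
    show "g (k + p) = nf q r k (q+r-k) * pochhammer ((z + of_nat s) + of_nat (q+r-k)) k * pochhammer (z + of_nat (s+q+r)) p"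
    proof -
      have c: "g (k+p) = nf q r k (q+r-k) * pochhammer (z + of_nat (s + (q + r - k))) (k + p)"
        unfolding g_def using a by simp
      have e: "pochhammer (z + of_nat (s + (q + r - k))) (k + p) = pochhammer (z + of_nat (s + (q + r - k))) k * pochhammer (z + of_nat (s+q+r)) p"
        by (simp only: pochhammer_product' b)
      have f: "z + of_nat s + of_nat (q+r-k) = z + of_nat (s + (q+r-k))" by simp
      show ?thesis by (simp only: c e f mult.assoc)
    qed
  qed simp
  also have "\<dots> = pochhammer (z + of_nat s) r * pochhammer (z + of_nat (s+q+r)) p"
    by (subst nf_N) simp_all
  finally show ?thesis using True by (simp add: g_def)
qed


lemma sum_le_ext:
  fixes f :: "nat \<Rightarrow> 'a::comm_monoid_add"
  assumes "m \<le> n"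
  shows "(\<Sum>p\<le>m. f p) = (\<Sum>p\<le>n. if p \<le> m then f p else 0)"
proof -
  have "(\<Sum>p\<le>n. if p \<le> m then f p else 0) = sum f ({..n} \<inter> {p. p \<le> m})"
    by (simp add: sum.inter_restrict)
  also have "{..n} \<inter> {p. p \<le> m} = {..m}" using assms by auto
  finally show ?thesis by simp
qed

lemma box_collapse:
  fixes f :: "nat \<Rightarrow> nat \<Rightarrow> 'a::comm_monoid_add"
  assumes "c \<le> d"
  shows "(\<Sum>r\<le>d. \<Sum>s\<le>d. if r + s = c then f r s else 0) = (\<Sum>r\<le>c. f r (c - r))"
proof -
  have "(\<Sum>s\<le>d. if r + s = c then f r s else 0) = (if r \<le> c then f r (c - r) else 0)" for r
  proof -
    have "(\<Sum>s\<le>d. if r + s = c then f r s else 0) = (\<Sum>s\<le>d. if s = c - r then (if r \<le> c then f r s else 0) else 0)"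
      by (rule sum.cong) auto
    also have "\<dots> = (if r \<le> c then f r (c - r) else 0)"
    proof -
      have "c - r \<le> d" using assms by simp
      then show ?thesis by (simp add: sum.delta)
    qed
    finally show ?thesis .
  qed
  then have "(\<Sum>r\<le>d. \<Sum>s\<le>d. if r + s = c then f r s else 0) = (\<Sum>r\<le>d. if r \<le> c then f r (c - r) else 0)"
    by simp
  also have "\<dots> = (\<Sum>r\<le>c. f r (c - r))" using sum_le_ext[OF assms, of "\<lambda>r. f r (c - r)"] by simp
  finally show ?thesis .
qed

lemma box_ext:
  fixes f :: "nat \<Rightarrow> nat \<Rightarrow> 'a::comm_monoid_add"
  assumes "c \<le> d"
  shows "(\<Sum>r\<le>c. \<Sum>s\<le>c. if r + s = c then f r s else 0) = (\<Sum>r\<le>d. \<Sum>s\<le>d. if r + s = c then f r s else 0)"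
  unfolding box_collapse[OF assms] box_collapse[OF order_refl] ..

lemma swap3:
  "(\<Sum>i\<in>A. \<Sum>s\<in>C. \<Sum>q\<in>D. f i s q) = (\<Sum>s\<in>C. \<Sum>q\<in>D. \<Sum>i\<in>A. f i s q)"
  by (rule trans[OF sum.swap], rule sum.cong[OF refl], rule sum.swap)

lemma swap4:
  "(\<Sum>i\<in>A. \<Sum>p\<in>B. \<Sum>s\<in>C. \<Sum>q\<in>D. f i p s q) = (\<Sum>p\<in>B. \<Sum>s\<in>C. \<Sum>q\<in>D. \<Sum>i\<in>A. f i p s q)"
  by (rule trans[OF sum.swap], rule sum.cong[OF refl], rule swap3)

lemma swap5:
  "(\<Sum>i\<in>A. \<Sum>p\<in>B. \<Sum>s\<in>C. \<Sum>q\<in>D. \<Sum>r\<in>E. f i p s q r) = (\<Sum>p\<in>B. \<Sum>s\<in>C. \<Sum>q\<in>D. \<Sum>r\<in>E. \<Sum>i\<in>A. f i p s q r)"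
  by (rule trans[OF sum.swap], rule sum.cong[OF refl], rule swap4)

definition opr :: "ser \<Rightarrow> complex \<Rightarrow> nat \<Rightarrow> complex" where
  "opr X z d = (\<Sum>p\<le>d. \<Sum>q\<le>d. if p + q = d then X p q * pochhammer (z + of_nat q) p else 0)"

definition ostar :: "(complex \<Rightarrow> nat \<Rightarrow> complex) \<Rightarrow> (complex \<Rightarrow> nat \<Rightarrow> complex) \<Rightarrow> complex \<Rightarrow> nat \<Rightarrow> complex" where
  "ostar F G z d = (\<Sum>c\<le>d. G z c * F (z + of_nat c) (d - c))"

lemma opr_alt: "opr X z d = (\<Sum>p\<le>d. X p (d - p) * pochhammer (z + of_nat (d - p)) p)"
  unfolding opr_def by (rule box_collapse) simp

lemma opr_ext: "c \<le> d \<Longrightarrow> opr X z c = (\<Sum>p\<le>d. \<Sum>q\<le>d. if p + q = c then X p q * pochhammer (z + of_nat q) p else 0)"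
  unfolding opr_def by (rule box_ext)

lemma c_collapse:
  fixes F :: "nat \<Rightarrow> 'a::comm_monoid_add"
  shows "(\<Sum>c\<le>d. if r + s = c \<and> p + q = d - c then F c else 0) = (if p + q + r + s = d then F (r + s) else 0)"
proof -
  have "(\<Sum>c\<le>d. if r + s = c \<and> p + q = d - c then F c else 0)
      = (\<Sum>c\<le>d. if c = r + s then (if p + q + r + s = d then F c else 0) else 0)"
    by (rule sum.cong) auto
  also have "\<dots> = (if p + q + r + s = d then F (r + s) else 0)"
    by (simp add: sum.delta)
  finally show ?thesis .
qed

lemma opr_mult: "opr (amult X Y) z d = ostar (opr X) (opr Y) z d"
proof -
  define T where "T = (\<Sum>p\<le>d. \<Sum>s\<le>d. \<Sum>q\<le>d. \<Sum>r\<le>d. X p q * Y r s *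
     (if p+q+r+s = d then pochhammer (z + of_nat s) r * pochhammer (z + of_nat (s+q+r)) p else 0))"
  have L1: "opr (amult X Y) z d = (\<Sum>i\<le>d. \<Sum>p\<le>d. \<Sum>s\<le>d. \<Sum>q\<le>d. \<Sum>r\<le>d. X p q * Y r s *
     (if p \<le> i \<and> s \<le> d - i then nf q r (i-p) (d-i-s) * pochhammer (z + of_nat (d-i)) i else 0))"
    unfolding opr_alt
  proof (rule sum.cong[OF refl])
    fix i assume "i \<in> {..d}"
    then have i: "i \<le> d" by simp
    have "amult X Y i (d - i) = (\<Sum>p\<le>d. if p \<le> i then (\<Sum>s\<le>d - i. \<Sum>q\<le>d. \<Sum>r\<le>d. X p q * Y r s * nf q r (i - p) (d - i - s)) else 0)"
    proof -
      have idi: "i + (d - i) = d" using i by simp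
      show ?thesis unfolding amult_def idi by (rule sum_le_ext[OF i])
    qed
    also have "\<dots> = (\<Sum>p\<le>d. \<Sum>s\<le>d. if p \<le> i \<and> s \<le> d - i then (\<Sum>q\<le>d. \<Sum>r\<le>d. X p q * Y r s * nf q r (i - p) (d - i - s)) else 0)"
      by (rule sum.cong[OF refl]) (simp add: sum_le_ext[of "d - i" d] del: diff_diff_left)
    finally have "amult X Y i (d - i) * pochhammer (z + of_nat (d - i)) i =
       (\<Sum>p\<le>d. \<Sum>s\<le>d. if p \<le> i \<and> s \<le> d - i then (\<Sum>q\<le>d. \<Sum>r\<le>d. X p q * Y r s * nf q r (i - p) (d - i - s)) else 0) * pochhammer (z + of_nat (d - i)) i"
      by simp
    also have "\<dots> = (\<Sum>p\<le>d. \<Sum>s\<le>d. \<Sum>q\<le>d. \<Sum>r\<le>d. X p q * Y r s *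
     (if p \<le> i \<and> s \<le> d - i then nf q r (i-p) (d-i-s) * pochhammer (z + of_nat (d-i)) i else 0))"
      unfolding sum_distrib_right by (intro sum.cong refl) (auto simp: sum_distrib_right mult.assoc simp del: diff_diff_left)
    finally show "amult X Y i (d - i) * pochhammer (z + of_nat (d - i)) i = (\<Sum>p\<le>d. \<Sum>s\<le>d. \<Sum>q\<le>d. \<Sum>r\<le>d. X p q * Y r s *
     (if p \<le> i \<and> s \<le> d - i then nf q r (i-p) (d-i-s) * pochhammer (z + of_nat (d-i)) i else 0))" .
  qed
  also have "\<dots> = T"
    unfolding T_def apply (subst swap5)
    by (intro sum.cong refl) (simp only: sum_distrib_left[symmetric] key_sum)
  finally have LHS: "opr (amult X Y) z d = T" .
  have "ostar (opr X) (opr Y) z d = (\<Sum>c\<le>d. \<Sum>r\<le>d. \<Sum>s\<le>d. \<Sum>p\<le>d. \<Sum>q\<le>d.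
      if r + s = c \<and> p + q = d - c then (Y r s * pochhammer (z + of_nat s) r) * (X p q * pochhammer (z + of_nat c + of_nat q) p) else 0)"
    unfolding ostar_def
  proof (rule sum.cong[OF refl])
    fix c assume "c \<in> {..d}"
    then have c: "c \<le> d" by simp
    show "opr Y z c * opr X (z + of_nat c) (d - c) = (\<Sum>r\<le>d. \<Sum>s\<le>d. \<Sum>p\<le>d. \<Sum>q\<le>d.
      if r + s = c \<and> p + q = d - c then (Y r s * pochhammer (z + of_nat s) r) * (X p q * pochhammer (z + of_nat c + of_nat q) p) else 0)"
      unfolding opr_ext[OF c, of Y] opr_ext[OF diff_le_self[of d c], of X] sum_distrib_right
      unfolding sum_distrib_left by (intro sum.cong refl) auto
  qed
  also have "\<dots> = (\<Sum>r\<le>d. \<Sum>s\<le>d. \<Sum>p\<le>d. \<Sum>q\<le>d. if p + q + r + s = d then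
      (Y r s * pochhammer (z + of_nat s) r) * (X p q * pochhammer (z + of_nat (r + s) + of_nat q) p) else 0)"
    by (subst swap5) (simp only: c_collapse)
  also have "\<dots> = (\<Sum>s\<le>d. \<Sum>p\<le>d. \<Sum>q\<le>d. \<Sum>r\<le>d. if p + q + r + s = d then
      (Y r s * pochhammer (z + of_nat s) r) * (X p q * pochhammer (z + of_nat (r + s) + of_nat q) p) else 0)"
    by (subst swap4) (rule refl)
  also have "\<dots> = T"
    unfolding T_def
    apply (rule trans[OF sum.swap])
    apply (intro sum.cong refl)
    apply (simp add: algebra_simps)
    done
  finally show ?thesis using LHS by simp
qed


lemma ostar_assoc: "ostar (ostar F G) H z d = ostar F (ostar G H) z d"
proof -
  define g where "g a b = H z a * (G (z + of_nat a) b * F (z + of_nat a + of_nat b) (d - a - b))" for a b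
  have "ostar (ostar F G) H z d = (\<Sum>a\<le>d. \<Sum>b\<le>d-a. g a b)"
    unfolding ostar_def g_def by (simp add: sum_distrib_left algebra_simps)
  also have "\<dots> = (\<Sum>(a,b)\<in>Sigma {..d} (\<lambda>a. {..d-a}). g a b)"
    by (rule sum.Sigma) auto
  also have "Sigma {..d} (\<lambda>a. {..d-a}) = {(a,b). a + b \<le> d}" by auto
  also have "(\<Sum>(a,b)\<in>{(a,b). a + b \<le> d}. g a b) = (\<Sum>c\<le>d. \<Sum>a\<le>c. g a (c - a))"
    by (rule sum.triangle_reindex_eq)
  also have "\<dots> = ostar F (ostar G H) z d"
    unfolding ostar_def sum_distrib_right
  proof (intro sum.cong refl)
    fix c a assume "c \<in> {..d}" "a \<in> {..c}"
    then have "a \<le> c" by simp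
    then have e: "z + of_nat a + of_nat (c - a) = z + of_nat c" "d - a - (c - a) = d - c"
      by (simp_all add: of_nat_diff)
    show "g a (c - a) = H z a * G (z + of_nat a) (c - a) * F (z + of_nat c) (d - c)"
      unfolding g_def e by (simp add: mult.assoc)
  qed
  finally show ?thesis .
qed

definition oid :: "complex \<Rightarrow> nat \<Rightarrow> complex" where
  "oid z d = (if d = 0 then 1 else 0)"

lemma ostar_oid_right: "ostar F oid = F"
proof (intro ext)
  fix z d
  have "ostar F oid z d = (\<Sum>c\<le>d. if c = 0 then F z d else 0)"
    unfolding ostar_def oid_def by (rule sum.cong) auto
  then show "ostar F oid z d = F z d" by (simp add: sum.delta)
qed

lemma ostar_oid_left: "ostar oid F = F"
proof (intro ext)
  fix z d
  have "ostar oid F z d = (\<Sum>c\<le>d. if c = d then F z c else 0)"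
    unfolding ostar_def oid_def by (rule sum.cong) auto
  then show "ostar oid F z d = F z d" by (simp add: sum.delta)
qed

lemma ostar_cancel:
  assumes F0: "\<And>z. F z 0 = 1" and eq: "ostar F D1 = ostar F D2"
  shows "D1 = D2"
proof -
  have "\<forall>z. D1 z d = D2 z d" for d
  proof (induction d rule: less_induct)
    case (less d)
    show ?case
    proof
      fix z
      have split: "ostar F D z d = (\<Sum>c<d. D z c * F (z + of_nat c) (d - c)) + D z d" for D
        unfolding ostar_def lessThan_Suc_atMost[symmetric] sum.lessThan_Suc by (simp add: F0)
      have "(\<Sum>c<d. D1 z c * F (z + of_nat c) (d - c)) = (\<Sum>c<d. D2 z c * F (z + of_nat c) (d - c))"
        using less by simp
      moreover have "ostar F D1 z d = ostar F D2 z d" using eq by simp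
      ultimately show "D1 z d = D2 z d" unfolding split by simp
    qed
  qed
  then show ?thesis by (intro ext) auto
qed

lemma opr_aone: "opr aone = oid"
proof (intro ext)
  fix z d
  have "opr aone z d = (\<Sum>p\<le>d. if p = 0 then (if d = 0 then 1 else 0) else 0)"
    unfolding opr_alt aone_def by (rule sum.cong) auto
  then show "opr aone z d = oid z d" by (simp add: oid_def sum.delta)
qed

lemma opr_zero: "opr X z 0 = X 0 0"
  unfolding opr_alt by simp

lemma opr_inj:
  assumes eq: "opr A = opr B"
  shows "A = B"
proof -
  define D where "D p q = A p q - B p q" for p q
  have D0: "(\<Sum>p\<le>d. D p (d - p) * pochhammer (z + of_nat (d - p)) p) = 0" for z d
  proof -
    have "opr A z d - opr B z d = 0" using eq by simp
    then show ?thesis unfolding opr_alt D_def by (simp add: sum_subtractf[symmetric] algebra_simps)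
  qed
  have main: "t \<le> d \<Longrightarrow> D t (d - t) = 0" for t d
  proof (induction t rule: less_induct)
    case (less t)
    define z0 :: complex where "z0 = of_nat (t + 1) - of_nat d"
    have tm: "D p (d - p) * pochhammer (z0 + of_nat (d - p)) p = (if p = t then D t (d - t) * fact t else 0)"
      if "p \<le> d" for p
    proof -
      have zz: "z0 + of_nat (d - p) = of_nat (t + 1) - of_nat p" using that by (simp add: z0_def of_nat_diff)
      consider "p < t" | "p = t" | "t < p" by linarith
      then show ?thesis
      proof cases
        case 1
        then show ?thesis using less.IH[of p] less.prems by simp
      next
        case 2
        have "pochhammer (of_nat (t + 1) - of_nat t :: complex) t = fact t"
          by (simp add: pochhammer_fact)
        then show ?thesis using 2 zz by simp
      next
        case 3
        have "(of_nat (t + 1) - of_nat p :: complex) = - of_nat (p - t - 1)"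
          using 3 by (simp add: of_nat_diff)
        then have "pochhammer (of_nat (t + 1) - of_nat p :: complex) p = 0"
          using 3 by (subst pochhammer_eq_0_iff) (auto intro!: exI[of _ "p - t - 1"])
        then show ?thesis using 3 zz by simp
      qed
    qed
    have "0 = (\<Sum>p\<le>d. D p (d - p) * pochhammer (z0 + of_nat (d - p)) p)" using D0 by simp
    also have "\<dots> = (\<Sum>p\<le>d. if p = t then D t (d - t) * fact t else 0)"
      by (intro sum.cong refl) (rule tm, simp)
    also have "\<dots> = D t (d - t) * fact t" using less.prems by (simp add: sum.delta)
    finally show ?case by simp
  qed
  show ?thesis
  proof (intro ext)
    fix i j
    show "A i j = B i j" using main[of i "i + j"] by (simp add: D_def)
  qed
qed

lemma right_to_left_inverse:
  assumes X0: "X 0 0 = 1" and r: "amult X Y = aone"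
  shows "amult Y X = aone"
proof -
  define F where "F = opr X"
  define G where "G = opr Y"
  have opr_m: "opr (amult U V) = ostar (opr U) (opr V)" for U V
    by (intro ext) (rule opr_mult)
  have FG: "ostar F G = oid" unfolding F_def G_def using r opr_m[of X Y] by (simp add: opr_aone)
  have F0: "F z 0 = 1" for z unfolding F_def opr_zero X0 ..
  have assoc: "ostar (ostar U V) W = ostar U (ostar V W)" for U V W
    by (intro ext) (rule ostar_assoc)
  have "ostar F (ostar G F) = ostar F oid"
    by (simp add: assoc[symmetric] FG ostar_oid_left ostar_oid_right)
  then have "ostar G F = oid" using ostar_cancel[of F "ostar G F" oid] F0 by blast
  then have "opr (amult Y X) = opr aone" unfolding opr_m opr_aone F_def G_def .
  then show ?thesis by (rule opr_inj)
qed


function yinv :: "ser \<Rightarrow> nat \<Rightarrow> nat \<Rightarrow> complex" where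
  "yinv X i j = aone i j - (\<Sum>p\<le>i. \<Sum>s\<le>j. \<Sum>q\<le>i+j. \<Sum>r\<le>i+j.
      if (p = 0 \<and> q = 0) \<or> i + j \<le> r + s then 0 else X p q * yinv X r s * nf q r (i - p) (j - s))"
  by auto
termination by (relation "measure (\<lambda>(X,i,j). i + j)") auto

declare yinv.simps[simp del]

lemma nf_0_left: "nf 0 r k l = (if k = r \<and> l = 0 then 1 else 0)"
  by (auto simp: nf_closed pochhammer_0_left)

lemma delta_le: "(\<Sum>r\<le>(n::nat). if r = i then f r else 0) = (if i \<le> n then f i else (0::'a::comm_monoid_add))"
  by simp

lemma delta2: "(\<Sum>p\<le>(i::nat). \<Sum>q\<le>(n::nat). if p = 0 \<and> q = 0 then g p q else 0) = (g 0 0 :: 'a::comm_monoid_add)"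
proof -
  have "(\<Sum>p\<le>i. \<Sum>q\<le>n. if p = 0 \<and> q = 0 then g p q else 0) = (\<Sum>p\<le>i. if p = 0 then g p 0 else 0)"
    by (rule sum.cong) auto
  then show ?thesis by simp
qed

lemma yinv_right:
  assumes X0: "X 0 0 = 1"
  shows "amult X (yinv X) = aone"
proof (intro ext)
  fix i j
  define Y where "Y = yinv X"
  define tm where "tm p s q r = X p q * Y r s * nf q r (i - p) (j - s)" for p s q r
  define S where "S = (\<Sum>p\<le>i. \<Sum>s\<le>j. \<Sum>q\<le>i+j. \<Sum>r\<le>i+j.
      if (p = 0 \<and> q = 0) \<or> i + j \<le> r + s then 0 else tm p s q r)"
  have Yij: "Y i j = aone i j - S"
    unfolding Y_def S_def tm_def by (subst yinv.simps) simp
  have split: "tm p s q r = (if p = 0 \<and> q = 0 then tm p s q r else 0)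
      + (if (p = 0 \<and> q = 0) \<or> i + j \<le> r + s then 0 else tm p s q r)"
    if "p \<le> i" "s \<le> j" for p s q r
  proof (cases "\<not> (p = 0 \<and> q = 0) \<and> i + j \<le> r + s")
    case True
    then have "\<not> ((i - p) + (j - s) = q + r \<and> i - p \<le> r)" using that by auto
    then have "tm p s q r = 0" unfolding tm_def by (simp add: nf_zero)
    then show ?thesis using True by auto
  next
    case False
    then show ?thesis by auto
  qed
  have "amult X Y i j = (\<Sum>p\<le>i. \<Sum>s\<le>j. \<Sum>q\<le>i+j. \<Sum>r\<le>i+j. (if p = 0 \<and> q = 0 then tm p s q r else 0)
      + (if (p = 0 \<and> q = 0) \<or> i + j \<le> r + s then 0 else tm p s q r))"
    unfolding amult_def tm_def[symmetric]
    by (intro sum.cong refl) (rule split, simp_all)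
  also have "\<dots> = (\<Sum>p\<le>i. \<Sum>s\<le>j. \<Sum>q\<le>i+j. \<Sum>r\<le>i+j. (if p = 0 \<and> q = 0 then tm p s q r else 0)) + S"
    unfolding S_def by (simp only: sum.distrib)
  also have "(\<Sum>p\<le>i. \<Sum>s\<le>j. \<Sum>q\<le>i+j. \<Sum>r\<le>i+j. (if p = 0 \<and> q = 0 then tm p s q r else 0))
     = (\<Sum>s\<le>j. \<Sum>r\<le>i+j. tm 0 s 0 r)"
    apply (subst swap4)
    apply (rule sum.cong[OF refl])
    apply (subst swap3)
    apply (rule sum.cong[OF refl])
    apply (rule delta2)
    done
  also have "(\<Sum>s\<le>j. \<Sum>r\<le>i+j. tm 0 s 0 r) = (\<Sum>s\<le>j. if s = j then (\<Sum>r\<le>i+j. if r = i then Y r s else 0) else 0)"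
  proof (rule sum.cong[OF refl])
    fix s assume "s \<in> {..j}"
    then have "tm 0 s 0 r = (if s = j then (if r = i then Y r s else 0) else 0)" for r
      by (auto simp: tm_def X0 nf_0_left)
    then show "(\<Sum>r\<le>i+j. tm 0 s 0 r) = (if s = j then (\<Sum>r\<le>i+j. if r = i then Y r s else 0) else 0)"
      by (cases "s = j") simp_all
  qed
  also have "\<dots> = Y i j" by (simp only: delta_le) simp
  finally show "amult X (yinv X) i j = aone i j" using Yij Y_def by simp
qed



lemma poch_fact: "pochhammer (Suc q) m * fact q = (fact (q + m) :: nat)"
  by (induction m) (simp_all add: pochhammer_Suc algebra_simps)

lemma hockey:
  "(\<Sum>l\<le>j. if q \<le> l then real (pochhammer q (l - q)) / fact (l - q) else 0) = real (j choose q)"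
proof (induction j arbitrary: q)
  case 0
  then show ?case by (cases q) auto
next
  case (Suc j)
  have "(\<Sum>l\<le>Suc j. if q \<le> l then real (pochhammer q (l - q)) / fact (l - q) else 0)
      = real (j choose q) + (if q \<le> Suc j then real (pochhammer q (Suc j - q)) / fact (Suc j - q) else 0)"
    by (simp add: Suc.IH)
  also have "\<dots> = real (Suc j choose q)"
  proof (cases q)
    case 0
    then show ?thesis by (simp add: pochhammer_0_left)
  next
    case (Suc q')
    show ?thesis
    proof (cases "q' \<le> j")
      case True
      have m: "Suc j - q = j - q'" using Suc by simp
      have pf: "real (pochhammer (Suc q') (j - q')) * fact q' = fact j"
        using poch_fact[of q' "j - q'"] True by (metis of_nat_fact of_nat_mult le_add_diff_inverse)
      have "real (pochhammer q (Suc j - q)) / fact (Suc j - q) = fact j / (fact q' * fact (j - q'))"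
        unfolding m Suc using pf by (simp add: field_simps)
      also have "\<dots> = real (j choose q')" using True by (simp add: binomial_fact)
      finally show ?thesis using Suc True by simp
    next
      case False
      then show ?thesis using Suc by simp
    qed
  qed
  finally show ?case .
qed

lemma hockey_s:
  "(\<Sum>s\<le>j. if q \<le> j - s then real (pochhammer q (j - s - q)) / fact (j - s - q) else 0) = real (j choose q)"
proof -
  define g where "g l = (if q \<le> l then real (pochhammer q (l - q)) / fact (l - q) else 0)" for l
  have "(\<Sum>s\<le>j. g (j - s)) = (\<Sum>s<Suc j. g (Suc j - Suc s))" by (simp add: lessThan_Suc_atMost)
  also have "\<dots> = (\<Sum>s<Suc j. g s)" by (rule sum.nat_diff_reindex)
  also have "\<dots> = real (j choose q)" using hockey[where j=j and q=q] by (simp add: lessThan_Suc_atMost g_def)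
  finally show ?thesis by (simp add: g_def)
qed

lemma comb_ineq:
  assumes "p \<le> i" "q \<le> j"
  shows "fact (i + j - (p + q)) * fact q * (j choose q) * fact i \<le> (fact (i + j) * fact (i - p) :: nat)"
proof -
  have fi: "fact i = fact p * fact (i - p) * (i choose p)"
    using binomial_fact_lemma[OF assms(1)] by (simp add: algebra_simps)
  have fe: "fact p * fact q \<le> (fact (p + q) :: nat)"
  proof -
    have "fact p * fact q * ((p + q) choose p) = (fact (p + q) :: nat)"
      using binomial_fact_lemma[of p "p+q"] by simp
    moreover have "(p + q) choose p \<ge> 1" by (simp add: Suc_leI)
    ultimately show ?thesis by (metis mult_le_mono2 nat_mult_1_right)
  qed
  have v: "(i choose p) * (j choose q) \<le> (i + j) choose (p + q)"
  proof -
    have "(i choose p) * (j choose (p + q - p)) \<le> (\<Sum>k\<le>p+q. (i choose k) * (j choose (p + q - k)))"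
      by (rule member_le_sum) auto
    then show ?thesis by (simp add: vandermonde)
  qed
  have en: "p + q \<le> i + j" using assms by simp
  have fn: "fact (i + j) = fact (p + q) * fact (i + j - (p + q)) * ((i + j) choose (p + q))"
    using binomial_fact_lemma[OF en] by (simp add: algebra_simps)
  have "fact (i + j - (p + q)) * fact q * (j choose q) * fact i
      = fact (i - p) * (fact (i + j - (p + q)) * (fact p * fact q) * ((i choose p) * (j choose q)))"
    unfolding fi by (simp add: algebra_simps)
  also have "\<dots> \<le> fact (i - p) * (fact (i + j - (p + q)) * fact (p + q) * ((i + j) choose (p + q)))"
    by (intro mult_le_mono order_refl fe v)
  also have "\<dots> = fact (i + j) * fact (i - p)" unfolding fn by (simp add: algebra_simps)
  finally show ?thesis .
qed


lemma geom_part: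
  fixes t :: real
  assumes "0 \<le> t" "t \<le> 1/2"
  shows "(\<Sum>p\<le>i. t^p) \<le> 1 + 2*t" "1 \<le> (\<Sum>p\<le>i. t^p)"
proof -
  have e: "(1 - t) * (\<Sum>p\<le>i. t^p) = 1 - t^Suc i" by (rule sum_gp_basic)
  have "0 \<le> t^Suc i" using assms by simp
  then have "(1 - t) * (\<Sum>p\<le>i. t^p) \<le> (1 - t) * (1 + 2*t)"
  proof -
    have a: "0 \<le> t * (1 - 2*t)" using assms by simp
    have b: "(1 - t) * (1 + 2*t) = 1 + t * (1 - 2*t)" by (simp add: algebra_simps)
    show ?thesis unfolding e b using a \<open>0 \<le> t^Suc i\<close> by linarith
  qed
  then show "(\<Sum>p\<le>i. t^p) \<le> 1 + 2*t" using assms by (simp add: mult_le_cancel_left)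
  have "(\<Sum>p\<le>i. t^p) = 1 + (\<Sum>p<i. t^Suc p)" by (simp add: sum.atMost_shift)
  moreover have "0 \<le> (\<Sum>p<i. t^Suc p)" using assms by (intro sum_nonneg) simp
  ultimately show "1 \<le> (\<Sum>p\<le>i. t^p)" by simp
qed

lemma geom2:
  fixes t :: real
  assumes "0 \<le> t" "t \<le> 1/2"
  shows "(\<Sum>p\<le>i. \<Sum>q\<le>n. if p = 0 \<and> q = 0 then 0 else t^(p+q)) \<le> 6 * t"
proof -
  have "(\<Sum>p\<le>i. \<Sum>q\<le>n. if p = 0 \<and> q = 0 then 0 else t^(p+q))
     = (\<Sum>p\<le>i. \<Sum>q\<le>n. t^p * t^q - (if p = 0 \<and> q = 0 then 1 else 0))"
    by (intro sum.cong refl) (auto simp: power_add)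
  also have "\<dots> = (\<Sum>p\<le>i. t^p) * (\<Sum>q\<le>n. t^q) - 1"
    by (simp add: sum_subtractf sum_product delta2)
  also have "\<dots> \<le> (1 + 2*t) * (1 + 2*t) - 1"
    using geom_part[OF assms, of i] geom_part[OF assms, of n]
    by (intro diff_right_mono mult_mono) auto
  also have "\<dots> \<le> 6 * t"
  proof -
    have a: "0 \<le> t * (1 - 2*t)" using assms by simp
    have b: "(1 + 2*t) * (1 + 2*t) - 1 = 6 * t - 2 * (t * (1 - 2*t))" by (simp add: algebra_simps)
    show ?thesis unfolding b using a by linarith
  qed
  finally show ?thesis .
qed

definition Bf :: "real \<Rightarrow> nat \<Rightarrow> nat \<Rightarrow> real" where
  "Bf K r s = K^(r+s) * fact (r+s) / fact r"

lemma norm_nf: "norm (nf q r k l) = (if k + l = q + r \<and> k \<le> r then real ((r choose k) * pochhammer q (r - k)) else 0)"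
  by (simp add: nf_closed norm_mult norm_power)


lemma Bf_nonneg: "0 \<le> K \<Longrightarrow> 0 \<le> Bf K r s"
  unfolding Bf_def by simp

lemma inner_bound:
  assumes pi: "p \<le> i" and R: "0 < R" and K: "0 < K" and C: "0 \<le> C"
  shows "(\<Sum>s\<le>j. \<Sum>r\<le>i+j. if (p = 0 \<and> q = 0) \<or> i + j \<le> r + s then 0
            else C * R^(p+q) * fact q * Bf K r s * norm (nf q r (i - p) (j - s)))
         \<le> (if p = 0 \<and> q = 0 then 0 else C * (R/K)^(p+q) * Bf K i j)"
proof (cases "p = 0 \<and> q = 0")
  case True
  then show ?thesis by simp
next
  case False
  define k where "k = i - p"
  define n where "n = i + j"
  define e where "e = p + q"
  have e1: "1 \<le> e" using False e_def by auto
  define A where "A = C * R^e * K^(n-e) * fact (n-e) / fact k * fact q"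
  have step1: "(\<Sum>r\<le>n. if (p = 0 \<and> q = 0) \<or> n \<le> r + s then 0 else C * R^e * fact q * Bf K r s * norm (nf q r k (j - s)))
       = A * (if q \<le> j - s then real (pochhammer q (j - s - q)) / fact (j - s - q) else 0)" if sj: "s \<le> j" for s
  proof -
    define r0 where "r0 = k + (j - s) - q"
    have c1: "k + (j - s) = q + r0 \<and> k \<le> r0" if "q \<le> j - s" using that unfolding r0_def by simp
    have c2: "r0 + s < n" if "q \<le> j - s" using that e1 pi sj unfolding r0_def n_def k_def e_def by simp
    have c3: "r = r0 \<and> q \<le> j - s" if "k + (j - s) = q + r \<and> k \<le> r" for r
      using that unfolding r0_def by simp
    have r0n: "r0 \<le> n" unfolding r0_def n_def k_def by simp
    have "(\<Sum>r\<le>n. if (p = 0 \<and> q = 0) \<or> n \<le> r + s then 0 else C * R^e * fact q * Bf K r s * norm (nf q r k (j - s)))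
       = (\<Sum>r\<le>n. if r = r0 then (if q \<le> j - s then C * R^e * fact q * Bf K r s * real ((r choose k) * pochhammer q (r - k)) else 0) else 0)"
    proof (rule sum.cong[OF refl])
      fix r assume "r \<in> {..n}"
      show "(if (p = 0 \<and> q = 0) \<or> n \<le> r + s then 0 else C * R^e * fact q * Bf K r s * norm (nf q r k (j - s)))
          = (if r = r0 then (if q \<le> j - s then C * R^e * fact q * Bf K r s * real ((r choose k) * pochhammer q (r - k)) else 0) else 0)"
      proof (cases "k + (j - s) = q + r \<and> k \<le> r")
        case True
        with c3 have "r = r0" "q \<le> j - s" by auto
        with c2 False show ?thesis using True by (auto simp: norm_nf)
      next
        case nc: False
        have "\<not> (r = r0 \<and> q \<le> j - s)" using nc c1 by auto
        then show ?thesis using nc by (auto simp: norm_nf)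
      qed
    qed
    also have "\<dots> = (if q \<le> j - s then C * R^e * fact q * Bf K r0 s * real ((r0 choose k) * pochhammer q (r0 - k)) else 0)"
      by (simp only: delta_le) (simp add: r0n)
    also have "\<dots> = A * (if q \<le> j - s then real (pochhammer q (j - s - q)) / fact (j - s - q) else 0)"
    proof (cases "q \<le> j - s")
      case True
      have m: "r0 - k = j - s - q" unfolding r0_def using True by simp
      have rs: "r0 + s = n - e" unfolding r0_def n_def e_def k_def using True pi sj by simp
      have kr: "k \<le> r0" using c1[OF True] by simp
      have bf: "real (r0 choose k) = fact r0 / (fact k * fact (r0 - k))"
        by (rule binomial_fact[OF kr])
      show ?thesis using True unfolding Bf_def A_def rs of_nat_mult bf m
        by (simp add: field_simps)
    next
      case False
      then show ?thesis by simp
    qed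
    finally show ?thesis .
  qed
  have "(\<Sum>s\<le>j. \<Sum>r\<le>i+j. if (p = 0 \<and> q = 0) \<or> i + j \<le> r + s then 0
            else C * R^(p+q) * fact q * Bf K r s * norm (nf q r (i - p) (j - s)))
      = (\<Sum>s\<le>j. A * (if q \<le> j - s then real (pochhammer q (j - s - q)) / fact (j - s - q) else 0))"
    unfolding n_def[symmetric] k_def[symmetric] e_def[symmetric]
    by (rule sum.cong[OF refl]) (rule step1, simp)
  also have "\<dots> = A * real (j choose q)"
    by (simp only: sum_distrib_left[symmetric] hockey_s)
  also have "\<dots> \<le> C * (R/K)^(p+q) * Bf K i j"
  proof (cases "q \<le> j")
    case False
    then have jq: "j < q" by simp
    moreover have "0 \<le> C * (R/K)^(p+q) * Bf K i j" using C R K Bf_nonneg[of K i j] by simp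
    ultimately show ?thesis by (simp add: binomial_eq_0[OF jq])
  next
    case True
    have en: "e \<le> n" unfolding e_def n_def using pi True by simp
    have ci: "real (fact (n - e) * fact q * (j choose q) * fact i) \<le> real (fact n * fact k)"
      using comb_ineq[OF pi True] unfolding n_def e_def k_def by (simp only: of_nat_le_iff)
    have ci2: "fact (n - e) * fact q * real (j choose q) / fact k \<le> fact n / fact i"
      using ci by (simp add: field_simps)
    have Kn: "K^n = K^e * K^(n-e)" using en by (simp add: power_add[symmetric])
    have "A * real (j choose q) = (C * R^e * K^(n-e)) * (fact (n - e) * fact q * real (j choose q) / fact k)"
      unfolding A_def by (simp add: field_simps)
    also have "\<dots> \<le> (C * R^e * K^(n-e)) * (fact n / fact i)"
      by (rule mult_left_mono[OF ci2]) (use C R K in simp)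
    also have "\<dots> = C * (R/K)^(p+q) * Bf K i j"
      unfolding Bf_def e_def[symmetric] n_def[symmetric] Kn using K by (simp add: field_simps power_divide)
    finally show ?thesis .
  qed
  finally show ?thesis by (simp only: if_not_P[OF False])
qed


lemma norm_sum4:
  "norm (\<Sum>a\<in>A. \<Sum>b\<in>B. \<Sum>c\<in>C. \<Sum>d\<in>D. (f a b c d :: complex))
    \<le> (\<Sum>a\<in>A. \<Sum>b\<in>B. \<Sum>c\<in>C. \<Sum>d\<in>D. norm (f a b c d))"
  apply (rule order_trans[OF norm_sum], rule sum_mono)
  apply (rule order_trans[OF norm_sum], rule sum_mono)
  apply (rule order_trans[OF norm_sum], rule sum_mono)
  apply (rule norm_sum)
  done

lemma yinv_bound:
  assumes X0: "X 0 0 = 1" and XB: "\<And>p q. norm (X p q) \<le> C * R^(p+q) * fact q"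
    and R: "0 < R" and C: "0 \<le> C" and K: "K = R * (6*C + 2)"
  shows "norm (yinv X i j) \<le> Bf K i j"
proof -
  have Kpos: "0 < K" using R C K by simp
  define t where "t = R / K"
  have t: "t = 1 / (6*C + 2)" using R C unfolding t_def K by simp
  have t0: "0 \<le> t" and t2: "t \<le> 1/2" using C unfolding t by (simp_all add: field_simps)
  have Ct: "C * (6 * t) \<le> 1" using C unfolding t by (simp add: field_simps)
  have "\<forall>i j. i + j = n \<longrightarrow> norm (yinv X i j) \<le> Bf K i j" for n
  proof (induction n rule: less_induct)
    case (less n)
    show ?case
    proof (intro allI impI)
      fix i j assume ij: "i + j = n"
      define S where "S = (\<Sum>p\<le>i. \<Sum>s\<le>j. \<Sum>q\<le>i+j. \<Sum>r\<le>i+j.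
        if (p = 0 \<and> q = 0) \<or> i + j \<le> r + s then 0 else X p q * yinv X r s * nf q r (i - p) (j - s))"
      have Y: "yinv X i j = aone i j - S" unfolding S_def by (subst yinv.simps) simp
      show "norm (yinv X i j) \<le> Bf K i j"
      proof (cases "n = 0")
        case True
        then have "i = 0" "j = 0" using ij by auto
        then have "S = 0" unfolding S_def by simp
        then show ?thesis using Y \<open>i = 0\<close> \<open>j = 0\<close> by (simp add: aone_def Bf_def)
      next
        case False
        then have a0: "aone i j = 0" using ij by (auto simp: aone_def)
        have "norm (yinv X i j) = norm S" using Y a0 by simp
        also have "\<dots> \<le> (\<Sum>p\<le>i. \<Sum>s\<le>j. \<Sum>q\<le>i+j. \<Sum>r\<le>i+j.
           norm (if (p = 0 \<and> q = 0) \<or> i + j \<le> r + s then 0 else X p q * yinv X r s * nf q r (i - p) (j - s)))"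
          unfolding S_def by (rule norm_sum4)
        also have "\<dots> \<le> (\<Sum>p\<le>i. \<Sum>s\<le>j. \<Sum>q\<le>i+j. \<Sum>r\<le>i+j.
           if (p = 0 \<and> q = 0) \<or> i + j \<le> r + s then 0 else C * R^(p+q) * fact q * Bf K r s * norm (nf q r (i - p) (j - s)))"
        proof (intro sum_mono)
          fix p s q r
          show "norm (if (p = 0 \<and> q = 0) \<or> i + j \<le> r + s then 0 else X p q * yinv X r s * nf q r (i - p) (j - s))
             \<le> (if (p = 0 \<and> q = 0) \<or> i + j \<le> r + s then 0 else C * R^(p+q) * fact q * Bf K r s * norm (nf q r (i - p) (j - s)))"
          proof (cases "(p = 0 \<and> q = 0) \<or> i + j \<le> r + s")
            case True
            then show ?thesis by simp
          next
            case F: False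
            then have "r + s < n" using ij by simp
            then have IH: "norm (yinv X r s) \<le> Bf K r s" using less.IH by blast
            have "norm (X p q * yinv X r s * nf q r (i - p) (j - s)) = norm (X p q) * norm (yinv X r s) * norm (nf q r (i - p) (j - s))"
              by (simp add: norm_mult)
            also have "\<dots> \<le> (C * R^(p+q) * fact q) * Bf K r s * norm (nf q r (i - p) (j - s))"
              by (intro mult_mono XB IH) (use C R Bf_nonneg[of K r s] Kpos in auto)
            finally show ?thesis using F by (simp only: if_not_P[OF F] if_False)
          qed
        qed
        also have "\<dots> = (\<Sum>p\<le>i. \<Sum>q\<le>i+j. \<Sum>s\<le>j. \<Sum>r\<le>i+j.
           if (p = 0 \<and> q = 0) \<or> i + j \<le> r + s then 0 else C * R^(p+q) * fact q * Bf K r s * norm (nf q r (i - p) (j - s)))"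
          by (rule sum.cong[OF refl]) (rule sum.swap)
        also have "\<dots> \<le> (\<Sum>p\<le>i. \<Sum>q\<le>i+j. if p = 0 \<and> q = 0 then 0 else C * t^(p+q) * Bf K i j)"
          unfolding t_def by (intro sum_mono inner_bound R Kpos C) simp
        also have "\<dots> = C * Bf K i j * (\<Sum>p\<le>i. \<Sum>q\<le>i+j. if p = 0 \<and> q = 0 then 0 else t^(p+q))"
          by (simp add: sum_distrib_left if_distrib algebra_simps cong: if_cong)
        also have "\<dots> \<le> C * Bf K i j * (6 * t)"
          by (intro mult_left_mono geom2 t0 t2) (use C Bf_nonneg[of K i j] Kpos in simp)
        also have "\<dots> = (C * (6 * t)) * Bf K i j" by simp
        also have "\<dots> \<le> 1 * Bf K i j"
          by (intro mult_right_mono Ct) (use Bf_nonneg[of K i j] Kpos in simp)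
        finally show ?thesis by simp
      qed
    qed
  qed
  then show ?thesis by blast
qed


lemma Bf_le: assumes "0 \<le> K" shows "Bf K p q \<le> 1 * (2*K)^(p+q) * fact q"
proof -
  have f: "fact (p + q) = fact p * fact q * real ((p + q) choose p)"
    using binomial_fact_lemma[of p "p+q"] by (metis add_diff_cancel_left' le_add1 of_nat_fact of_nat_mult)
  have b: "real ((p + q) choose p) \<le> 2^(p+q)"
    using binomial_le_pow2[of "p+q" p] by (metis of_nat_le_iff of_nat_numeral of_nat_power)
  have "Bf K p q = K^(p+q) * fact q * real ((p + q) choose p)"
    unfolding Bf_def f by (simp add: field_simps)
  also have "\<dots> \<le> K^(p+q) * fact q * 2^(p+q)"
    by (intro mult_left_mono b) (use assms in simp)
  also have "\<dots> = 1 * (2*K)^(p+q) * fact q" by (simp add: power_mult_distrib)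
  finally show ?thesis .
qed

theorem proposition1p1p7:
  fixes X :: ser
  assumes "conv_ser X" and "X 0 0 = 1"
  shows "\<exists>Y. conv_ser Y \<and> amult X Y = aone \<and> amult Y X = aone"
proof -
  obtain R C where R: "R > 1" and C: "C > 0" and XB: "\<And>p q. norm (X p q) \<le> C * R^(p+q) * fact q"
    using assms(1) unfolding conv_ser_def by blast
  define K where "K = R * (6*C + 2)"
  have K2: "2 < K"
  proof -
    have "(2::real) < 6*C + 2" using C by simp
    then have "1 * 2 < R * (6*C + 2)" using R by (intro mult_strict_mono) auto
    then show ?thesis unfolding K_def by simp
  qed
  define Y where "Y = yinv X"
  have r: "amult X Y = aone" unfolding Y_def by (rule yinv_right[where X=X, OF assms(2)])
  have l: "amult Y X = aone" by (rule right_to_left_inverse[where X=X and Y=Y, OF assms(2) r])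
  have "conv_ser Y"
    unfolding conv_ser_def
  proof (intro exI conjI allI)
    show "1 < 2 * K" using K2 by simp
    show "(0::real) < 1" by simp
    fix p q
    have "norm (Y p q) \<le> Bf K p q"
      unfolding Y_def by (rule yinv_bound[where X=X and C=C and R=R, OF assms(2) XB]) (use R C K_def in simp_all)
    also have "\<dots> \<le> 1 * (2*K)^(p+q) * fact q" by (rule Bf_le) (use K2 in simp)
    finally show "norm (Y p q) \<le> 1 * (2*K)^(p+q) * fact q" .
  qed
  then show ?thesis using r l by blast
qed

end
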